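(* Let $\rho_n^{AB}$ be a state on $\mathcal{H}_A^{(n)}\otimes\mathcal{H}_B^{(n)}$ with $\dim\mathcal{H}_A^{(n)}=d^n$, and let $\rho_n^B$ be its reduced state on $B$. Let $\mathcal{E}^A_{n,1},\dots,\mathcal{E}^A_{n,M}$ be CPTP maps on $\mathcal{B}(\mathcal{H}_A^{(n)})$, let $\rho^{AB}_{n,i}=(\mathcal{E}^A_{n,i}\otimes\mathrm{id}^B)\rho_n^{AB}$, and let $E^{AB}_{n,1},\dots,E^{AB}_{n,M}\ge0$ with $\sum_iE^{AB}_{n,i}\le I$. Then for every real $\gamma$, the average error probability $P_e=\frac1M\sum_{i=1}^M(1-\mathrm{Tr}(\rho^{AB}_{n,i}E^{AB}_{n,i}))$ satisfies \[ P_e\ge 1-\max_i\mathrm{Tr}\Big[\{\rho^{AB}_{n,i}\ge e^{-n\gamma}I^A_n\otimes\rho^B_n\}\big(\rho^{AB}_{n,i}-e^{-n\gamma}I^A_n\otimes\rho^B_n\big)\Big]-\frac{e^{n(\log d-\gamma)}}{M}. \]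
   Context: Logarithms are natural. For self-adjoint $A=\sum_i\lambda_i|i\rangle\langle i|$, $\{A\ge0\}:=\sum_{\lambda_i\ge0}|i\rangle\langle i|$ and $\{A\ge B\}:=\{A-B\ge0\}$. $I^A_n$ denotes the identity on $\mathcal{H}_A^{(n)}$. *)

theory Defs
  imports "HOL-Analysis.Analysis"
begin

text \<open>Finite-dimensional quantum operators: complex square matrices indexed by a finite type.
  The bipartite system A B has index type 'a \<times> 'b.\<close>

type_synonym 'n cmat = "complex^'n^'n"

definition cinner :: "complex^'n::finite \<Rightarrow> complex^'n \<Rightarrow> complex" where
  "cinner v w = (\<Sum>i\<in>UNIV. cnj (v$i) * w$i)"

definition mtrace :: "'n::finite cmat \<Rightarrow> complex" where
  "mtrace A = (\<Sum>i\<in>UNIV. A$i$i)"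

definition adjoint_mat :: "'n::finite cmat \<Rightarrow> 'n cmat" where
  "adjoint_mat A = (\<chi> i j. cnj (A$j$i))"

definition cscale :: "complex \<Rightarrow> 'n::finite cmat \<Rightarrow> 'n cmat" where
  "cscale c A = (\<chi> i j. c * A$i$j)"

definition hermitian :: "'n::finite cmat \<Rightarrow> bool" where
  "hermitian A \<longleftrightarrow> adjoint_mat A = A"

definition psd :: "'n::finite cmat \<Rightarrow> bool" where
  "psd A \<longleftrightarrow> hermitian A \<and> (\<forall>v. 0 \<le> Re (cinner v (A *v v)))"

definition op_le :: "'n::finite cmat \<Rightarrow> 'n::finite cmat \<Rightarrow> bool" where
  "op_le A B \<longleftrightarrow> psd (B - A)"

definition density :: "'n::finite cmat \<Rightarrow> bool" where
  "density A \<longleftrightarrow> psd A \<and> mtrace A = 1"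

definition unitary_mat :: "'n::finite cmat \<Rightarrow> bool" where
  "unitary_mat U \<longleftrightarrow> adjoint_mat U ** U = mat 1"

definition diag_real :: "('n::finite \<Rightarrow> real) \<Rightarrow> 'n::finite cmat" where
  "diag_real lam = (\<chi> i j. if i = j then complex_of_real (lam i) else 0)"

text \<open>Spectral projection {A \<ge> 0}: for a spectral decomposition A = U diag(lam) U*,
  the projection U diag(1[lam_i \<ge> 0]) U*. (Independent of the chosen decomposition
  for Hermitian A.)\<close>
definition nonneg_proj :: "'n::finite cmat \<Rightarrow> 'n::finite cmat" where
  "nonneg_proj A = (SOME P. \<exists>U lam. unitary_mat U \<and>
       A = U ** diag_real lam ** adjoint_mat U \<and>
       P = U ** diag_real (\<lambda>i. if lam i \<ge> 0 then 1 else 0) ** adjoint_mat U)"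

definition kron :: "'a::finite cmat \<Rightarrow> 'b::finite cmat \<Rightarrow> ('a \<times> 'b) cmat" where
  "kron A B = (\<chi> p q. A$(fst p)$(fst q) * B$(snd p)$(snd q))"

definition ptrace_A :: "('a::finite \<times> 'b::finite) cmat \<Rightarrow> 'b cmat" where
  "ptrace_A R = (\<chi> b b'. \<Sum>a\<in>UNIV. R$(a,b)$(a,b'))"

text \<open>(E \<otimes> id^B) applied to a bipartite operator, for linear E on B(H_A).\<close>
definition apply_left :: "('a::finite cmat \<Rightarrow> 'a cmat) \<Rightarrow> ('a \<times> 'b::finite) cmat \<Rightarrow> ('a \<times> 'b) cmat" where
  "apply_left E R = (\<chi> p q. E (\<chi> x y. R$(x, snd p)$(y, snd q)) $ (fst p) $ (fst q))"

text \<open>Positivity of a k\<times>k block operator with blocks X i j (i.e. an operator on H \<otimes> C^k).\<close>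
definition block_psd :: "nat \<Rightarrow> (nat \<Rightarrow> nat \<Rightarrow> 'n::finite cmat) \<Rightarrow> bool" where
  "block_psd k X \<longleftrightarrow> (\<forall>i<k. \<forall>j<k. X i j = adjoint_mat (X j i)) \<and>
     (\<forall>v :: nat \<Rightarrow> complex^'n. 0 \<le> Re (\<Sum>i<k. \<Sum>j<k. cinner (v i) (X i j *v v j)))"

definition complex_linear_map :: "('n::finite cmat \<Rightarrow> 'm::finite cmat) \<Rightarrow> bool" where
  "complex_linear_map E \<longleftrightarrow> (\<forall>X Y. E (X + Y) = E X + E Y) \<and> (\<forall>c X. E (cscale c X) = cscale c (E X))"

text \<open>Complete positivity: E \<otimes> id_k is positive for every ancilla dimension k.\<close>
definition completely_positive :: "('n::finite cmat \<Rightarrow> 'm::finite cmat) \<Rightarrow> bool" where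
  "completely_positive E \<longleftrightarrow> (\<forall>k X. block_psd k X \<longrightarrow> block_psd k (\<lambda>i j. E (X i j)))"

definition trace_preserving :: "('n::finite cmat \<Rightarrow> 'm::finite cmat) \<Rightarrow> bool" where
  "trace_preserving E \<longleftrightarrow> (\<forall>X. mtrace (E X) = mtrace X)"

definition cptp :: "('n::finite cmat \<Rightarrow> 'm::finite cmat) \<Rightarrow> bool" where
  "cptp E \<longleftrightarrow> complex_linear_map E \<and> completely_positive E \<and> trace_preserving E"

end

theory Submission
  imports Defs
begin

lemma cinner_add_right: "cinner v (w + z) = cinner v w + cinner v z"
  by (simp add: cinner_def algebra_simps sum.distrib)
lemma cinner_add_left: "cinner (w + z) v = cinner w v + cinner z v"
  by (simp add: cinner_def algebra_simps sum.distrib)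
lemma cinner_diff_right: "cinner v (w - z) = cinner v w - cinner v z"
  by (simp add: cinner_def algebra_simps sum_subtractf)
lemma cinner_diff_left: "cinner (w - z) v = cinner w v - cinner z v"
  by (simp add: cinner_def algebra_simps sum_subtractf)
lemma cinner_scale_right: "cinner v (c *s w) = c * cinner v w"
  by (simp add: cinner_def algebra_simps sum_distrib_left)
lemma cinner_scale_left: "cinner (c *s v) w = cnj c * cinner v w"
  by (simp add: cinner_def algebra_simps sum_distrib_left)
lemma cinner_zero_left[simp]: "cinner 0 v = 0" by (simp add: cinner_def)
lemma cinner_zero_right[simp]: "cinner v 0 = 0" by (simp add: cinner_def)
lemma cinner_commute: "cinner w v = cnj (cinner v w)"
  by (simp add: cinner_def mult.commute)
lemma cinner_sum_right: "cinner v (sum f S) = (\<Sum>j\<in>S. cinner v (f j))"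
  by (induct S rule: infinite_finite_induct) (auto simp: cinner_add_right)

lemma Re_cinner: "Re (cinner v w) = inner v w"
  by (simp add: cinner_def inner_vec_def Re_sum inner_complex_def)

lemma cinner_self: "cinner v v = complex_of_real (norm v ^ 2)"
proof -
  have "Im (cinner v v) = 0"
    by (simp add: cinner_def Im_sum)
  moreover have "Re (cinner v v) = norm v ^ 2"
    by (simp add: Re_cinner power2_norm_eq_inner)
  ultimately show ?thesis by (simp add: complex_eq_iff)
qed

lemma cinner_self_eq_0: "cinner v v = 0 \<longleftrightarrow> v = 0"
  by (simp add: cinner_self)

lemma hermitian_cinner:
  assumes "hermitian A"
  shows "cinner v (A *v w) = cinner (A *v v) w"
proof -
  have h: "\<And>i j. cnj (A$j$i) = A$i$j"
    using assms unfolding hermitian_def adjoint_mat_def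
    by (metis vec_lambda_beta)
  have "cinner v (A *v w) = (\<Sum>i\<in>UNIV. \<Sum>j\<in>UNIV. cnj (v$i) * A$i$j * w$j)"
    by (simp add: cinner_def matrix_vector_mult_def sum_distrib_left mult.assoc)
  also have "\<dots> = (\<Sum>j\<in>UNIV. \<Sum>i\<in>UNIV. cnj (v$i) * A$i$j * w$j)"
    by (rule sum.swap)
  also have "\<dots> = (\<Sum>j\<in>UNIV. \<Sum>i\<in>UNIV. cnj (A$j$i * v$i) * w$j)"
    by (simp add: h mult.commute mult.left_commute)
  also have "\<dots> = cinner (A *v v) w"
    by (simp add: cinner_def matrix_vector_mult_def sum_distrib_right)
  finally show ?thesis .
qed

lemma cinner_scaleR_right: "cinner v (r *\<^sub>R w) = complex_of_real r * cinner v w"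
  by (simp add: cinner_def sum_distrib_left scaleR_conv_of_real[where 'a=complex] algebra_simps)
lemma cinner_scaleR_left: "cinner (r *\<^sub>R v) w = complex_of_real r * cinner v w"
  by (simp add: cinner_def sum_distrib_left scaleR_conv_of_real[where 'a=complex] algebra_simps)
lemma of_real_smult: "complex_of_real r *s v = r *\<^sub>R v"
  by (simp add: vec_eq_iff scaleR_conv_of_real[where 'a=complex])

lemma cmatvec_scaleR: "(A::'n::finite cmat) *v (r *\<^sub>R x) = r *\<^sub>R (A *v x)"
  by (simp add: vec_eq_iff matrix_vector_mult_def scaleR_conv_of_real[where 'a=complex]
      sum_distrib_left mult.left_commute)

lemma hermitian_cinner_real:
  assumes "hermitian A"
  shows "cinner v (A *v v) = complex_of_real (Re (cinner v (A *v v)))"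
proof -
  have "cinner v (A *v v) = cnj (cinner v (A *v v))"
    using hermitian_cinner[OF assms, of v v] cinner_commute[of "A *v v" v] by simp
  then have "Im (cinner v (A *v v)) = 0"
    by (metis Reals_cnj_iff complex_is_Real_iff)
  then show ?thesis by (simp add: complex_eq_iff)
qed

lemma exists_eigen_in_perp:
  fixes A :: "'n::finite cmat" and u :: "nat \<Rightarrow> complex^'n"
  assumes herm: "hermitian A"
    and inv: "\<And>v. (\<forall>j<k. cinner (u j) v = 0) \<Longrightarrow> (\<forall>j<k. cinner (u j) (A *v v) = 0)"
    and ne: "v0 \<noteq> 0" "\<forall>j<k. cinner (u j) v0 = 0"
  shows "\<exists>v (l::real). norm v = 1 \<and> (\<forall>j<k. cinner (u j) v = 0) \<and> A *v v = l *\<^sub>R v"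
proof -
  define T where "T = {v. \<forall>j<k. cinner (u j) v = 0}"
  have Tscale: "r *\<^sub>R v \<in> T" if "v \<in> T" for r v
    using that by (simp add: T_def cinner_scaleR_right)
  have Tadd: "v + w \<in> T" if "v \<in> T" "w \<in> T" for v w
    using that by (simp add: T_def cinner_add_right)
  have TA: "A *v v \<in> T" if "v \<in> T" for v
    using that inv by (simp add: T_def)
  have closedT: "closed T"
  proof -
    have "T = (\<Inter>j\<in>{..<k}. {v. cinner (u j) v = 0})" by (auto simp: T_def)
    moreover have "closed {v. cinner (u j) v = 0}" for j
      by (rule closed_Collect_eq) (unfold cinner_def, (intro continuous_intros)+)
    ultimately show ?thesis by auto
  qed
  define K where "K = T \<inter> sphere 0 1"
  have compK: "compact K" unfolding K_def
    by (intro closed_Int_compact closedT compact_sphere)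
  have v0T: "v0 \<in> T" using ne by (simp add: T_def)
  have "(1 / norm v0) *\<^sub>R v0 \<in> K"
    using ne(1) Tscale[OF v0T] by (simp add: K_def)
  then have Kne: "K \<noteq> {}" by blast
  define f where "f v = inner v (A *v v)" for v :: "complex^'n"
  have contf: "continuous_on K f"
    unfolding f_def by (intro continuous_intros matrix_vector_mult_linear_continuous_on)
  obtain v where vK: "v \<in> K" and vmax: "\<And>y. y \<in> K \<Longrightarrow> f y \<le> f v"
    using continuous_attains_sup[OF compK Kne contf] by blast
  define l where "l = f v"
  have vT: "v \<in> T" and nv: "norm v = 1" using vK by (auto simp: K_def)
  have cvv: "cinner v v = 1" using nv by (simp add: cinner_self)
  have fRe: "f w = Re (cinner w (A *v w))" for w by (simp add: f_def Re_cinner)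
  have cvAv: "cinner v (A *v v) = complex_of_real l"
    using hermitian_cinner_real[OF herm, of v] by (simp add: l_def fRe)
  define z where "z = A *v v - l *\<^sub>R v"
  have zT: "z \<in> T" unfolding z_def using TA[OF vT] Tscale[OF vT, of "-l"] Tadd
    by (metis add_uminus_conv_diff scaleR_minus_left)
  have cvz: "cinner v z = 0"
    by (simp add: z_def cinner_diff_right cinner_scaleR_right cvAv cvv)
  have czv: "cinner z v = 0" using cvz cinner_commute[of z v] by simp
  define s where "s = norm z ^ 2"
  have czz: "cinner z z = complex_of_real s" by (simp add: s_def cinner_self)
  have czAv: "cinner z (A *v v) = complex_of_real s"
  proof -
    have "A *v v = z + l *\<^sub>R v" by (simp add: z_def)
    then show ?thesis by (simp add: cinner_add_right cinner_scaleR_right czz czv)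
  qed
  have cvAz: "cinner v (A *v z) = complex_of_real s"
    using hermitian_cinner[OF herm, of v z] cinner_commute[of "A *v v" z] czAv by simp
  define b where "b = Re (cinner z (A *v z))"
  have key: "2 * t * s \<le> t^2 * (l * s - b)" for t :: real
  proof -
    define w where "w = v + t *\<^sub>R z"
    have wT: "w \<in> T" unfolding w_def by (intro Tadd vT Tscale zT)
    have Atz: "A *v (t *\<^sub>R z) = t *\<^sub>R (A *v z)" by (rule cmatvec_scaleR)
    have fw: "f w = l + 2 * t * s + t^2 * b"
      by (simp add: Atz fRe w_def matrix_vector_right_distrib matrix_vector_mult_scaleR cinner_add_left cinner_add_right
          cinner_scaleR_left cinner_scaleR_right cvAv cvAz czAv b_def power2_eq_square algebra_simps)
    have nw: "norm w ^ 2 = 1 + t^2 * s"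
    proof -
      have "complex_of_real (norm w ^ 2) = cinner w w" by (simp add: cinner_self)
      also have "\<dots> = complex_of_real (1 + t^2 * s)"
        by (simp add: w_def cinner_add_left cinner_add_right cinner_scaleR_left
            cinner_scaleR_right cvv cvz czv czz power2_eq_square)
      finally show ?thesis by (simp only: of_real_eq_iff)
    qed
    have "f w \<le> l * norm w ^ 2"
    proof (cases "w = 0")
      case True then show ?thesis by (simp add: f_def)
    next
      case False
      define w' where "w' = (1 / norm w) *\<^sub>R w"
      have "w' \<in> K" using False Tscale[OF wT] by (simp add: K_def w'_def)
      then have "f w' \<le> l" using vmax l_def by simp
      moreover have "f w' = f w / norm w ^ 2"
        by (simp add: f_def w'_def cmatvec_scaleR power2_eq_square)
      ultimately show ?thesis using False by (simp add: divide_le_eq)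
    qed
    then show ?thesis using fw nw by (simp add: algebra_simps)
  qed
  have "s = 0"
  proof (rule ccontr)
    assume "s \<noteq> 0"
    then have sp: "s > 0" by (simp add: s_def)
    define C where "C = l * s - b"
    define t where "t = s / (\<bar>C\<bar> + 1)"
    have tp: "t > 0" using sp by (simp add: t_def)
    have "2 * t * s \<le> t^2 * C" using key[of t] by (simp add: C_def)
    then have "2 * s \<le> t * C" using tp by (simp add: power2_eq_square)
    also have "t * C \<le> t * \<bar>C\<bar>" using tp by (simp add: mult_left_mono)
    also have "t * \<bar>C\<bar> < s" using sp by (simp add: t_def field_simps)
    finally show False using sp by simp
  qed
  then have "z = 0" by (simp add: s_def)
  then have "A *v v = l *\<^sub>R v" by (simp add: z_def)
  then show ?thesis using nv vT by (auto simp: T_def)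
qed

lemma smult_split: "(c::complex) *s x = Re c *\<^sub>R x + Im c *\<^sub>R (\<i> *s x)"
proof -
  have e: "c * y = complex_of_real (Re c) * y + complex_of_real (Im c) * (\<i> * y)" for y
    by (simp add: complex_eq_iff algebra_simps)
  show ?thesis
    by (simp add: vec_eq_iff scaleR_conv_of_real[where 'a=complex] e)
qed

lemma exists_perp:
  fixes u :: "nat \<Rightarrow> complex^'n::finite"
  assumes orth: "\<forall>i<k. \<forall>j<k. cinner (u i) (u j) = (if i = j then 1 else 0)"
    and kn: "k < CARD('n)"
  shows "\<exists>v. v \<noteq> 0 \<and> (\<forall>j<k. cinner (u j) v = 0)"
proof (rule ccontr)
  assume H: "\<not> ?thesis"
  define B where "B = u ` {..<k} \<union> (\<lambda>j. \<i> *s u j) ` {..<k}"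
  have "x \<in> span B" for x
  proof -
    define w where "w = x - (\<Sum>j<k. cinner (u j) x *s u j)"
    have "cinner (u i) w = 0" if "i < k" for i
    proof -
      have "cinner (u i) (\<Sum>j<k. cinner (u j) x *s u j) = (\<Sum>j<k. cinner (u j) x * (if i = j then 1 else 0))"
        using that orth by (simp add: cinner_sum_right cinner_scale_right)
      also have "\<dots> = cinner (u i) x" using that by (simp add: if_distrib cong: if_cong)
      finally show ?thesis by (simp add: w_def cinner_diff_right)
    qed
    then have "w = 0" using H by blast
    then have x: "x = (\<Sum>j<k. cinner (u j) x *s u j)" by (simp add: w_def)
    have "(\<Sum>j<k. cinner (u j) x *s u j) \<in> span B"
    proof (rule span_sum)
      fix j assume j: "j \<in> {..<k}"
      have "u j \<in> span B" "\<i> *s u j \<in> span B" using j by (auto simp: B_def intro: span_base)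
      then show "cinner (u j) x *s u j \<in> span B"
        by (subst smult_split) (intro span_add span_scale)
    qed
    then show ?thesis using x by simp
  qed
  then have "UNIV \<subseteq> span B" by blast
  then have "dim (UNIV :: (complex^'n) set) \<le> card B"
    by (rule dim_le_card) (simp add: B_def)
  also have "card B \<le> k + k"
    unfolding B_def
    using card_Un_le[of "u ` {..<k}" "(\<lambda>j. \<i> *s u j) ` {..<k}"]
      card_image_le[of "{..<k}" u] card_image_le[of "{..<k}" "\<lambda>j. \<i> *s u j"] by simp
  finally show False using kn by (simp add: dim_UNIV DIM_cart)
qed

lemma eigen_family:
  fixes A :: "'n::finite cmat"
  assumes herm: "hermitian A"
  shows "k \<le> CARD('n) \<Longrightarrow> \<exists>u lam. (\<forall>i<k. \<forall>j<k. cinner (u i) (u j) = (if i = j then 1 else 0))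
          \<and> (\<forall>j<k. A *v u j = (lam j :: real) *\<^sub>R u j)"
proof (induction k)
  case 0
  then show ?case by simp
next
  case (Suc k)
  then obtain u lam where orth: "\<forall>i<k. \<forall>j<k. cinner (u i) (u j) = (if i = j then 1 else 0)"
    and eig: "\<forall>j<k. A *v u j = (lam j :: real) *\<^sub>R u j" by auto
  obtain v0 where v0: "v0 \<noteq> 0" "\<forall>j<k. cinner (u j) v0 = 0"
    using exists_perp[OF orth] Suc.prems by auto
  have inv: "\<forall>j<k. cinner (u j) (A *v v) = 0" if "\<forall>j<k. cinner (u j) v = 0" for v
  proof (intro allI impI)
    fix j assume j: "j < k"
    have "cinner (u j) (A *v v) = cinner (A *v u j) v" by (rule hermitian_cinner[OF herm])
    also have "\<dots> = 0" using j eig that by (simp add: cinner_scaleR_left)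
    finally show "cinner (u j) (A *v v) = 0" .
  qed
  obtain v l where v: "norm v = 1" "\<forall>j<k. cinner (u j) v = 0" "A *v v = l *\<^sub>R v"
    using exists_eigen_in_perp[OF herm inv v0] by blast
  have cvv: "cinner v v = 1" using v(1) by (simp add: cinner_self)
  have cvu: "cinner v (u j) = 0" if "j < k" for j
    using v(2) that cinner_commute[of v "u j"] by simp
  define u' where "u' = u(k := v)"
  define lam' where "lam' = lam(k := l)"
  have "\<forall>i<Suc k. \<forall>j<Suc k. cinner (u' i) (u' j) = (if i = j then 1 else 0)"
    using orth v(2) cvv cvu by (auto simp: u'_def less_Suc_eq)
  moreover have "\<forall>j<Suc k. A *v u' j = lam' j *\<^sub>R u' j"
    using eig v(3) by (auto simp: u'_def lam'_def less_Suc_eq)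
  ultimately show ?case by blast
qed

lemma spectral:
  fixes A :: "'n::finite cmat"
  assumes herm: "hermitian A"
  shows "\<exists>U lam. unitary_mat U \<and> A = U ** diag_real lam ** adjoint_mat U"
proof -
  obtain u lam where orth: "\<forall>i<CARD('n). \<forall>j<CARD('n). cinner (u i) (u j) = (if i = j then 1 else 0)"
    and eig: "\<forall>j<CARD('n). A *v u j = (lam j :: real) *\<^sub>R u j"
    using eigen_family[OF herm, of "CARD('n)"] by auto
  obtain g where g: "bij_betw g (UNIV::'n set) {0..<CARD('n)}"
    using ex_bij_betw_finite_nat[of "UNIV::'n set"] by auto
  have gl: "g c < CARD('n)" for c using g by (auto simp: bij_betw_def)
  have ginj: "g c = g c' \<longleftrightarrow> c = c'" for c c' using g by (auto simp: bij_betw_def inj_on_def)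
  define U :: "'n cmat" where "U = (\<chi> r c. u (g c) $ r)"
  define D :: "'n cmat" where "D = diag_real (\<lambda>c. lam (g c))"
  have UU: "adjoint_mat U ** U = mat 1"
  proof -
    have "(adjoint_mat U ** U) $ c $ c' = cinner (u (g c)) (u (g c'))" for c c'
      by (simp add: adjoint_mat_def matrix_matrix_mult_def U_def cinner_def)
    then show ?thesis using orth gl ginj by (simp add: vec_eq_iff mat_def)
  qed
  then have UU': "U ** adjoint_mat U = mat 1" by (simp add: matrix_left_right_inverse)
  have AU: "A ** U = U ** D"
  proof -
    have "(A ** U) $ r $ c = (A *v u (g c)) $ r" for r c
      by (simp add: matrix_matrix_mult_def matrix_vector_mult_def U_def)
    moreover have "(U ** D) $ r $ c = (lam (g c) *\<^sub>R u (g c)) $ r" for r c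
    proof -
      have "(U ** D) $ r $ c = (\<Sum>k\<in>UNIV. u (g k) $ r * (if k = c then complex_of_real (lam (g k)) else 0))"
        by (simp add: matrix_matrix_mult_def U_def D_def diag_real_def)
      also have "\<dots> = u (g c) $ r * complex_of_real (lam (g c))"
        by (simp add: if_distrib cong: if_cong)
      finally show ?thesis by (simp add: scaleR_conv_of_real[where 'a=complex] mult.commute)
    qed
    ultimately show ?thesis using eig gl by (simp add: vec_eq_iff)
  qed
  have "A = A ** (U ** adjoint_mat U)" using UU' by simp
  also have "\<dots> = U ** D ** adjoint_mat U" by (simp add: matrix_mul_assoc AU)
  finally have "A = U ** D ** adjoint_mat U" .
  then show ?thesis using UU unfolding unitary_mat_def D_def by blast
qed

lemma mtrace_mult_comm: "mtrace ((A::'n::finite cmat) ** B) = mtrace (B ** A)"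
proof -
  have "mtrace (A ** B) = (\<Sum>i\<in>UNIV. \<Sum>k\<in>UNIV. A$i$k * B$k$i)"
    by (simp add: mtrace_def matrix_matrix_mult_def)
  also have "\<dots> = (\<Sum>k\<in>UNIV. \<Sum>i\<in>UNIV. A$i$k * B$k$i)" by (rule sum.swap)
  also have "\<dots> = mtrace (B ** A)"
    by (simp add: mtrace_def matrix_matrix_mult_def mult.commute)
  finally show ?thesis .
qed

lemma mtrace_add: "mtrace (A + B) = mtrace A + mtrace B"
  by (simp add: mtrace_def sum.distrib)
lemma mtrace_diff: "mtrace (A - B) = mtrace A - mtrace B"
  by (simp add: mtrace_def sum_subtractf)
lemma mtrace_cscale: "mtrace (cscale c A) = c * mtrace A"
  by (simp add: mtrace_def cscale_def sum_distrib_left)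
lemma mtrace_sum: "mtrace (sum f S) = (\<Sum>i\<in>S. mtrace (f i))"
proof -
  have "mtrace (sum f S) = (\<Sum>k\<in>UNIV. \<Sum>i\<in>S. f i $ k $ k)"
    by (simp add: mtrace_def sum_component)
  also have "\<dots> = (\<Sum>i\<in>S. \<Sum>k\<in>UNIV. f i $ k $ k)" by (rule sum.swap)
  finally show ?thesis by (simp add: mtrace_def)
qed

lemma matrix_diff_rdistrib: "((A::'n::finite cmat) - B) ** E = A ** E - B ** E"
  by (simp add: vec_eq_iff matrix_matrix_mult_def algebra_simps sum_subtractf)
lemma matrix_cscale_left: "cscale c (A::'n::finite cmat) ** E = cscale c (A ** E)"
  by (simp add: vec_eq_iff matrix_matrix_mult_def cscale_def sum_distrib_left mult.assoc)
lemma matrix_sum_right: "(A::'n::finite cmat) ** sum f S = (\<Sum>i\<in>S. A ** f i)"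
  by (induct S rule: infinite_finite_induct) (auto simp: matrix_add_ldistrib)

lemma adj_entry: "(adjoint_mat U ** X ** U) $ j $ j = cinner (column j U) (X *v column j U)"
  by (simp add: adjoint_mat_def matrix_matrix_mult_def cinner_def matrix_vector_mult_def column_def
      sum_distrib_left sum_distrib_right mult.assoc)
    (rule sum.swap)

lemma diag_entry_mult: "(X ** diag_real lam) $ j $ j = X $ j $ j * complex_of_real (lam j)"
  by (simp add: matrix_matrix_mult_def diag_real_def if_distrib cong: if_cong)

lemma trace_diag_form:
  "mtrace (X ** (U ** diag_real lam ** adjoint_mat U)) =
     (\<Sum>j\<in>UNIV. complex_of_real (lam j) * cinner (column j U) (X *v column j U))"
proof -
  have "mtrace (X ** (U ** diag_real lam ** adjoint_mat U)) = mtrace ((X ** U ** diag_real lam) ** adjoint_mat U)"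
    by (simp add: matrix_mul_assoc)
  also have "\<dots> = mtrace (adjoint_mat U ** (X ** U ** diag_real lam))"
    by (rule mtrace_mult_comm)
  also have "\<dots> = mtrace (adjoint_mat U ** X ** U ** diag_real lam)"
    by (simp add: matrix_mul_assoc)
  also have "\<dots> = (\<Sum>j\<in>UNIV. complex_of_real (lam j) * cinner (column j U) (X *v column j U))"
    by (simp add: mtrace_def diag_entry_mult adj_entry mult.commute)
  finally show ?thesis .
qed

lemma unitary_conj:
  assumes "unitary_mat U"
  shows "adjoint_mat U ** (U ** D ** adjoint_mat U) ** U = D"
proof -
  have UU: "adjoint_mat U ** U = mat 1" using assms by (simp add: unitary_mat_def)
  have "adjoint_mat U ** (U ** D ** adjoint_mat U) ** U = (adjoint_mat U ** U) ** D ** (adjoint_mat U ** U)"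
    by (simp add: matrix_mul_assoc)
  then show ?thesis using UU by simp
qed

lemma col_cinner:
  assumes "unitary_mat U" and that: "D' = U ** D ** adjoint_mat U"
  shows "cinner (column j U) (D' *v column j U) = D $ j $ j"
  using adj_entry[of U D' j] unitary_conj[OF assms(1), of D] that by simp

lemma col_norm:
  assumes "unitary_mat U"
  shows "cinner (column j U) (column j U) = 1"
proof -
  have "adjoint_mat U ** mat 1 ** U = mat 1"
    using assms by (simp add: unitary_mat_def)
  then have "(adjoint_mat U ** mat 1 ** U) $ j $ j = 1"
    by (simp add: mat_def)
  then show ?thesis by (simp only: adj_entry matrix_vector_mul_lid)
qed

lemma psd_cinner: "psd X \<Longrightarrow> 0 \<le> Re (cinner v (X *v v))"
  by (simp add: psd_def)

lemma psd_hermitian: "psd X \<Longrightarrow> hermitian X" by (simp add: psd_def)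

lemma psd_trace_nonneg:
  assumes A: "psd A" and B: "psd B"
  shows "0 \<le> Re (mtrace (A ** B))"
proof -
  obtain U lam where U: "unitary_mat U" and Bd: "B = U ** diag_real lam ** adjoint_mat U"
    using spectral[OF psd_hermitian[OF B]] by blast
  have lamnn: "0 \<le> lam j" for j
  proof -
    have "cinner (column j U) (B *v column j U) = diag_real lam $ j $ j"
      by (rule col_cinner[OF U Bd])
    then have "lam j = Re (cinner (column j U) (B *v column j U))" by (simp add: diag_real_def)
    then show ?thesis using psd_cinner[OF B] by simp
  qed
  have "Re (mtrace (A ** B)) = (\<Sum>j\<in>UNIV. lam j * Re (cinner (column j U) (A *v column j U)))"
    by (simp add: Bd trace_diag_form Re_sum)
  also have "\<dots> \<ge> 0" using lamnn psd_cinner[OF A] by (intro sum_nonneg mult_nonneg_nonneg) auto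
  finally show ?thesis .
qed

lemma nonneg_proj_spec:
  assumes "hermitian R"
  shows "\<exists>U lam. unitary_mat U \<and> R = U ** diag_real lam ** adjoint_mat U \<and>
       nonneg_proj R = U ** diag_real (\<lambda>i. if lam i \<ge> 0 then 1 else 0) ** adjoint_mat U"
proof -
  have ex: "\<exists>P. \<exists>U lam. unitary_mat U \<and> R = U ** diag_real lam ** adjoint_mat U \<and>
       P = U ** diag_real (\<lambda>i. if lam i \<ge> 0 then 1 else 0) ** adjoint_mat U"
    using spectral[OF assms] by blast
  show ?thesis using someI_ex[OF ex] unfolding nonneg_proj_def by blast
qed

lemma trace_le_nonneg_proj:
  assumes R: "hermitian R" and E: "psd E" and E1: "op_le E (mat 1)"
  shows "Re (mtrace (R ** E)) \<le> Re (mtrace (nonneg_proj R ** R))"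
proof -
  obtain U lam where U: "unitary_mat U" and Rd: "R = U ** diag_real lam ** adjoint_mat U"
    and Pd: "nonneg_proj R = U ** diag_real (\<lambda>i. if lam i \<ge> 0 then 1 else 0) ** adjoint_mat U"
    using nonneg_proj_spec[OF R] by blast
  define x where "x j = Re (cinner (column j U) (E *v column j U))" for j
  have x0: "0 \<le> x j" for j using psd_cinner[OF E] by (simp add: x_def)
  have x1: "x j \<le> 1" for j
  proof -
    have "0 \<le> Re (cinner (column j U) ((mat 1 - E) *v column j U))"
      using E1 by (simp add: op_le_def psd_cinner)
    also have "(mat 1 - E) *v column j U = column j U - E *v column j U"
      by (simp add: matrix_vector_mult_diff_rdistrib)
    finally show ?thesis using col_norm[OF U, of j] by (simp add: x_def cinner_diff_right)
  qed
  have "Re (mtrace (R ** E)) = Re (mtrace (E ** R))" by (simp add: mtrace_mult_comm)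
  also have "\<dots> = (\<Sum>j\<in>UNIV. lam j * x j)"
    by (simp add: Rd trace_diag_form Re_sum x_def)
  also have "\<dots> \<le> (\<Sum>j\<in>UNIV. lam j * (if lam j \<ge> 0 then 1 else 0))"
  proof (rule sum_mono)
    fix j
    show "lam j * x j \<le> lam j * (if lam j \<ge> 0 then 1 else 0)"
      using x0[of j] x1[of j] by (cases "lam j \<ge> 0") (auto intro: mult_left_le mult_nonpos_nonneg)
  qed
  also have "\<dots> = Re (mtrace (nonneg_proj R ** R))"
  proof -
    have "cinner (column j U) (nonneg_proj R *v column j U) =
          diag_real (\<lambda>i. if lam i \<ge> 0 then 1 else 0) $ j $ j" for j
      by (rule col_cinner[OF U Pd])
    then show ?thesis
      by (simp add: Rd[symmetric] trace_diag_form[of "nonneg_proj R" U lam, folded Rd] Re_sum diag_real_def)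
  qed
  finally show ?thesis .
qed

lemma sum_prod_UNIV:
  fixes F :: "'a::finite \<times> 'b::finite \<Rightarrow> 'c::comm_monoid_add"
  shows "(\<Sum>p\<in>UNIV. F p) = (\<Sum>b\<in>UNIV. \<Sum>x\<in>UNIV. F (x, b))"
proof -
  have "(\<Sum>p\<in>UNIV. F p) = (\<Sum>p\<in>(UNIV::'a set) \<times> (UNIV::'b set). F p)"
    by (simp add: UNIV_Times_UNIV)
  also have "\<dots> = (\<Sum>x\<in>UNIV. \<Sum>b\<in>UNIV. F (x, b))"
    using sum.cartesian_product[of "\<lambda>x b. F (x, b)" UNIV UNIV] by simp
  also have "\<dots> = (\<Sum>b\<in>UNIV. \<Sum>x\<in>UNIV. F (x, b))" by (rule sum.swap)
  finally show ?thesis .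
qed

lemma hermitian_entry: "hermitian A \<Longrightarrow> cnj (A $ j $ i) = A $ i $ j"
  unfolding hermitian_def adjoint_mat_def by (metis vec_lambda_beta)

lemma hermitianI: "(\<And>i j. cnj (A $ j $ i) = A $ i $ j) \<Longrightarrow> hermitian A"
  unfolding hermitian_def adjoint_mat_def by (simp add: vec_eq_iff)

lemma quad_form:
  "cinner v (A *v v) = (\<Sum>p\<in>UNIV. \<Sum>q\<in>UNIV. cnj (v $ p) * A $ p $ q * v $ q)"
  by (simp add: cinner_def matrix_vector_mult_def sum_distrib_left mult.assoc)

lemma apply_left_hermitian:
  fixes rho :: "('a::finite \<times> 'b::finite) cmat" and Ch :: "'a cmat \<Rightarrow> 'a cmat"
  assumes rho: "psd rho" and cp: "completely_positive Ch"
  shows "hermitian (apply_left Ch rho)"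
proof -
  define K where "K = CARD('b)"
  obtain h where h: "bij_betw h (UNIV::'b set) {0..<K}"
    using ex_bij_betw_finite_nat[of "UNIV::'b set"] by (auto simp: K_def)
  define g where "g = inv_into UNIV h"
  have gh: "g (h b) = b" for b using h by (simp add: g_def bij_betw_def)
  have hK: "h b < K" for b using h by (auto simp: bij_betw_def)
  have hsurj: "i < K \<Longrightarrow> \<exists>b. i = h b" for i using h by (auto simp: bij_betw_def)
  have reidx: "(\<Sum>i<K. F i) = (\<Sum>b\<in>UNIV. F (h b))" for F :: "nat \<Rightarrow> complex"
    using sum.reindex_bij_betw[OF h, of F] by (simp add: atLeast0LessThan)
  define X where "X i j = (\<chi> x y. rho $ (x, g i) $ (y, g j))" for i j
  have rh: "cnj (rho $ q $ p) = rho $ p $ q" for p q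
    using hermitian_entry[OF psd_hermitian[OF rho]] .
  have "block_psd K X"
    unfolding block_psd_def
  proof (intro conjI allI impI)
    fix i j assume "i < K" "j < K"
    show "X i j = adjoint_mat (X j i)"
      by (simp add: X_def adjoint_mat_def vec_eq_iff rh)
  next
    fix v :: "nat \<Rightarrow> complex^'a"
    define w :: "complex^('a \<times> 'b)" where "w = (\<chi> p. v (h (snd p)) $ (fst p))"
    have "(\<Sum>i<K. \<Sum>j<K. cinner (v i) (X i j *v v j)) =
          (\<Sum>b\<in>UNIV. \<Sum>b'\<in>UNIV. cinner (v (h b)) (X (h b) (h b') *v v (h b')))"
      by (simp add: reidx)
    also have "\<dots> = (\<Sum>b\<in>UNIV. \<Sum>b'\<in>UNIV. \<Sum>x\<in>UNIV. \<Sum>y\<in>UNIV.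
                      cnj (v (h b) $ x) * rho $ (x, b) $ (y, b') * v (h b') $ y)"
      by (simp add: X_def gh cinner_def matrix_vector_mult_def sum_distrib_left mult.assoc)
    also have "\<dots> = (\<Sum>b\<in>UNIV. \<Sum>x\<in>UNIV. \<Sum>b'\<in>UNIV. \<Sum>y\<in>UNIV.
                      cnj (v (h b) $ x) * rho $ (x, b) $ (y, b') * v (h b') $ y)"
      by (rule sum.cong[OF refl], rule sum.swap)
    also have "\<dots> = cinner w (rho *v w)"
      by (simp add: quad_form sum_prod_UNIV w_def)
    finally have eq: "(\<Sum>i<K. \<Sum>j<K. cinner (v i) (X i j *v v j)) = cinner w (rho *v w)" .
    show "0 \<le> Re (\<Sum>i<K. \<Sum>j<K. cinner (v i) (X i j *v v j))"
      unfolding eq by (rule psd_cinner[OF rho])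
  qed
  then have "block_psd K (\<lambda>i j. Ch (X i j))" using cp unfolding completely_positive_def by blast
  then have ChX: "Ch (X i j) = adjoint_mat (Ch (X j i))" if "i < K" "j < K" for i j
    using that unfolding block_psd_def by blast
  have AL: "apply_left Ch rho $ p $ q = Ch (X (h (snd p)) (h (snd q))) $ fst p $ fst q" for p q
    by (simp add: apply_left_def X_def gh)
  show ?thesis
  proof (rule hermitianI)
    fix p q
    show "cnj (apply_left Ch rho $ q $ p) = apply_left Ch rho $ p $ q"
    proof -
      have e: "Ch (X (h (snd p)) (h (snd q))) = adjoint_mat (Ch (X (h (snd q)) (h (snd p))))"
        by (rule ChX[OF hK hK])
      show ?thesis unfolding AL e by (simp add: adjoint_mat_def)
    qed
  qed
qed

lemma psd_add: "psd A \<Longrightarrow> psd B \<Longrightarrow> psd (A + B)"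
  unfolding psd_def
  by (auto intro!: hermitianI simp: hermitian_entry matrix_vector_mult_add_rdistrib cinner_add_right)

lemma psd_zero: "psd (0 :: 'n::finite cmat)"
  unfolding psd_def by (auto intro!: hermitianI)

lemma psd_sum: "(\<And>i. i \<in> S \<Longrightarrow> psd (f i)) \<Longrightarrow> psd (sum f S)"
  by (induct S rule: infinite_finite_induct) (auto simp: psd_zero psd_add)

lemma quad_form_prod:
  fixes A :: "('a::finite \<times> 'b::finite) cmat"
  shows "cinner v (A *v v) = (\<Sum>b\<in>UNIV. \<Sum>x\<in>UNIV. \<Sum>b'\<in>UNIV. \<Sum>y\<in>UNIV.
          cnj (v $ (x, b)) * A $ (x, b) $ (y, b') * v $ (y, b'))"
  unfolding quad_form sum_prod_UNIV[where F="\<lambda>p. \<Sum>q\<in>UNIV. _ p q"] sum_prod_UNIV[where F="\<lambda>q. _ q"] ..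

lemma cinner_embed:
  fixes rho :: "('a::finite \<times> 'b::finite) cmat"
    and u :: "complex^'b"
  defines "w \<equiv> \<lambda>a. (\<chi> p. if fst p = a then u $ snd p else 0) :: complex^('a \<times> 'b)"
  shows "cinner (w a) (rho *v w a) = (\<Sum>b\<in>UNIV. \<Sum>b'\<in>UNIV. cnj (u $ b) * rho $ (a, b) $ (a, b') * u $ b')"
proof -
  have e: "cnj (w a $ (x, b)) * rho $ (x, b) $ (y, b') * w a $ (y, b') =
      (if y = a then (if x = a then cnj (u $ b) * rho $ (a, b) $ (a, b') * u $ b' else 0) else 0)" for x y b b'
    by (simp add: w_def)
  have e2: "(\<Sum>b'\<in>UNIV. \<Sum>y\<in>UNIV. cnj (w a $ (x, b)) * rho $ (x, b) $ (y, b') * w a $ (y, b')) =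
     (if x = a then (\<Sum>b'\<in>UNIV. cnj (u $ b) * rho $ (a, b) $ (a, b') * u $ b') else 0)" for x b
    by (cases "x = a") (simp_all add: e)
  show ?thesis unfolding quad_form_prod e2
    by simp
qed

lemma ptrace_psd:
  fixes rho :: "('a::finite \<times> 'b::finite) cmat"
  assumes rho: "psd rho"
  shows "psd (ptrace_A rho)"
proof -
  have rh: "cnj (rho $ q $ p) = rho $ p $ q" for p q
    using hermitian_entry[OF psd_hermitian[OF rho]] .
  have herm: "hermitian (ptrace_A rho)"
    by (rule hermitianI) (simp add: ptrace_A_def rh)
  have "0 \<le> Re (cinner u (ptrace_A rho *v u))" for u
  proof -
    define w :: "'a \<Rightarrow> complex^('a \<times> 'b)" where "w a = (\<chi> p. if fst p = a then u $ snd p else 0)" for a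
    have wq: "cinner (w a) (rho *v w a) = (\<Sum>b\<in>UNIV. \<Sum>b'\<in>UNIV. cnj (u $ b) * rho $ (a, b) $ (a, b') * u $ b')" for a
      unfolding w_def by (rule cinner_embed)
    have "cinner u (ptrace_A rho *v u) = (\<Sum>b\<in>UNIV. \<Sum>b'\<in>UNIV. \<Sum>a\<in>UNIV. cnj (u $ b) * rho $ (a, b) $ (a, b') * u $ b')"
      by (simp add: quad_form ptrace_A_def sum_distrib_left sum_distrib_right)
    also have "\<dots> = (\<Sum>b\<in>UNIV. \<Sum>a\<in>UNIV. \<Sum>b'\<in>UNIV. cnj (u $ b) * rho $ (a, b) $ (a, b') * u $ b')"
      by (rule sum.cong[OF refl], rule sum.swap)
    also have "\<dots> = (\<Sum>a\<in>UNIV. \<Sum>b\<in>UNIV. \<Sum>b'\<in>UNIV. cnj (u $ b) * rho $ (a, b) $ (a, b') * u $ b')"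
      by (rule sum.swap)
    also have "\<dots> = (\<Sum>a\<in>UNIV. cinner (w a) (rho *v w a))" by (simp add: wq)
    finally have "Re (cinner u (ptrace_A rho *v u)) = (\<Sum>a\<in>UNIV. Re (cinner (w a) (rho *v w a)))"
      by (simp add: Re_sum)
    also have "\<dots> \<ge> 0" by (intro sum_nonneg psd_cinner[OF rho])
    finally show ?thesis .
  qed
  then show ?thesis using herm by (simp add: psd_def)
qed

lemma kron_I_psd:
  fixes B :: "'b::finite cmat"
  assumes B: "psd B"
  shows "psd (kron (mat 1 :: 'a::finite cmat) B)"
proof -
  have bh: "cnj (B $ q $ p) = B $ p $ q" for p q
    using hermitian_entry[OF psd_hermitian[OF B]] .
  have herm: "hermitian (kron (mat 1 :: 'a::finite cmat) B)"
    by (rule hermitianI) (simp add: kron_def mat_def bh)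
  have "0 \<le> Re (cinner v (kron (mat 1 :: 'a::finite cmat) B *v v))" for v
  proof -
    define u where "u x = (\<chi> b. v $ (x, b))" for x
    have "cinner v (kron (mat 1 :: 'a::finite cmat) B *v v) =
        (\<Sum>b\<in>UNIV. \<Sum>x\<in>UNIV. \<Sum>b'\<in>UNIV. \<Sum>y\<in>UNIV.
          cnj (v $ (x, b)) * ((if x = y then 1 else 0) * B $ b $ b') * v $ (y, b'))"
      by (simp add: quad_form sum_prod_UNIV kron_def mat_def)
    also have "\<dots> = (\<Sum>b\<in>UNIV. \<Sum>x\<in>UNIV. \<Sum>b'\<in>UNIV. cnj (u x $ b) * B $ b $ b' * u x $ b')"
      by (simp add: u_def if_distrib if_distribR cong: if_cong)
    also have "\<dots> = (\<Sum>x\<in>UNIV. \<Sum>b\<in>UNIV. \<Sum>b'\<in>UNIV. cnj (u x $ b) * B $ b $ b' * u x $ b')"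
      by (rule sum.swap)
    also have "\<dots> = (\<Sum>x\<in>UNIV. cinner (u x) (B *v u x))" by (simp add: quad_form)
    finally have "Re (cinner v (kron (mat 1 :: 'a::finite cmat) B *v v)) = (\<Sum>x\<in>UNIV. Re (cinner (u x) (B *v u x)))"
      by (simp add: Re_sum)
    also have "\<dots> \<ge> 0" by (intro sum_nonneg psd_cinner[OF B])
    finally show ?thesis .
  qed
  then show ?thesis using herm by (simp add: psd_def)
qed

lemma mtrace_kron_I: "mtrace (kron (mat 1 :: 'a::finite cmat) (B :: 'b::finite cmat)) = of_nat CARD('a) * mtrace B"
  by (simp add: mtrace_def kron_def mat_def sum_prod_UNIV sum_distrib_left)

lemma mtrace_ptrace: "mtrace (ptrace_A (rho :: ('a::finite \<times> 'b::finite) cmat)) = mtrace rho"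
  by (simp add: mtrace_def ptrace_A_def sum_prod_UNIV)

lemma hermitian_diff_cscale:
  assumes "hermitian A" "hermitian B"
  shows "hermitian (A - cscale (complex_of_real c) B)"
  using hermitian_entry[OF assms(1)] hermitian_entry[OF assms(2)]
  by (intro hermitianI) (simp add: cscale_def)

lemma matrix_diff_ldistrib: "(A::'n::finite cmat) ** (B - C) = A ** B - A ** C"
  by (simp add: vec_eq_iff matrix_matrix_mult_def algebra_simps sum_subtractf)

lemma op_le_each:
  assumes fin: "finite S" and i: "i \<in> S" and E: "\<And>j. j \<in> S \<Longrightarrow> psd (E j)"
    and le: "op_le (sum E S) (mat 1)"
  shows "op_le (E i) (mat 1)"
proof -
  have "sum E S = E i + sum E (S - {i})" using fin i by (simp add: sum.remove)
  then have eq: "mat 1 - E i = (mat 1 - sum E S) + sum E (S - {i})" by (simp add: algebra_simps)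
  have "psd (mat 1 - sum E S)" using le by (simp add: op_le_def)
  moreover have "psd (sum E (S - {i}))" using E by (intro psd_sum) auto
  ultimately have "psd (mat 1 - E i)" unfolding eq by (rule psd_add)
  then show ?thesis by (simp add: op_le_def)
qed

theorem mainTheorem8:
  fixes d n M :: nat
    and rho :: "('a::finite \<times> 'b::finite) cmat"
    and Ch :: "nat \<Rightarrow> 'a cmat \<Rightarrow> 'a cmat"
    and Eop :: "nat \<Rightarrow> ('a \<times> 'b) cmat"
    and \<gamma> :: real
  assumes "CARD('a) = d ^ n"
    and "density rho"
    and "M \<ge> 1"
    and "\<forall>i\<in>{1..M}. cptp (Ch i)"
    and "\<forall>i\<in>{1..M}. psd (Eop i)"
    and "op_le (\<Sum>i=1..M. Eop i) (mat 1)"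
  shows "(1 / real M) * (\<Sum>i=1..M. 1 - Re (mtrace (apply_left (Ch i) rho ** Eop i)))
     \<ge> 1 - Max ((\<lambda>i. let R = apply_left (Ch i) rho - cscale (complex_of_real (exp (- real n * \<gamma>))) (kron (mat 1) (ptrace_A rho))
                     in Re (mtrace (nonneg_proj R ** R))) ` {1..M})
       - exp (real n * (ln (real d) - \<gamma>)) / real M"
proof -
  note card = assms(1) and dens = assms(2) and M1 = assms(3) and cptp = assms(4)
    and Epsd = assms(5) and Ele = assms(6)
  define c where "c = exp (- real n * \<gamma>)"
  define \<sigma> :: "('a \<times> 'b) cmat" where "\<sigma> = kron (mat 1) (ptrace_A rho)"
  define f where "f i = (let R = apply_left (Ch i) rho - cscale (complex_of_real (exp (- real n * \<gamma>))) (kron (mat 1) (ptrace_A rho))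
                     in Re (mtrace (nonneg_proj R ** R)))" for i
  define Mx where "Mx = Max (f ` {1..M})"
  define x where "x i = Re (mtrace (apply_left (Ch i) rho ** Eop i))" for i
  have rho: "psd rho" and tr1: "mtrace rho = 1" using dens by (auto simp: density_def)
  have sig: "psd \<sigma>" unfolding \<sigma>_def by (intro kron_I_psd ptrace_psd rho)
  have c0: "c \<ge> 0" by (simp add: c_def)
  have fin: "finite (f ` {1..M})" by simp
  have step: "x i \<le> Mx + c * Re (mtrace (\<sigma> ** Eop i))" if i: "i \<in> {1..M}" for i
  proof -
    define R where "R = apply_left (Ch i) rho - cscale (complex_of_real c) \<sigma>"
    have fi: "f i = Re (mtrace (nonneg_proj R ** R))"
      by (simp add: f_def R_def Let_def c_def \<sigma>_def)
    have hR: "hermitian R" unfolding R_def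
      using apply_left_hermitian[OF rho] cptp i psd_hermitian[OF sig]
      by (intro hermitian_diff_cscale) (auto simp: cptp_def)
    have Ei: "psd (Eop i)" using Epsd i by auto
    have Ei1: "op_le (Eop i) (mat 1)"
      by (rule op_le_each[of "{1..M}" i Eop]) (use i Epsd Ele in auto)
    have "mtrace (R ** Eop i) = mtrace (apply_left (Ch i) rho ** Eop i) - complex_of_real c * mtrace (\<sigma> ** Eop i)"
      by (simp add: R_def matrix_diff_rdistrib matrix_cscale_left mtrace_diff mtrace_cscale)
    then have "x i = Re (mtrace (R ** Eop i)) + c * Re (mtrace (\<sigma> ** Eop i))"
      by (simp add: x_def)
    also have "Re (mtrace (R ** Eop i)) \<le> f i"
      unfolding fi by (rule trace_le_nonneg_proj[OF hR Ei Ei1])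
    also have "f i \<le> Mx" unfolding Mx_def using fin i by (intro Max_ge) auto
    finally show ?thesis by simp
  qed
  have "(\<Sum>i=1..M. x i) \<le> (\<Sum>i=1..M. Mx + c * Re (mtrace (\<sigma> ** Eop i)))"
    by (rule sum_mono) (rule step)
  also have "\<dots> = real M * Mx + c * Re (mtrace (\<sigma> ** (\<Sum>i=1..M. Eop i)))"
    by (simp add: sum.distrib sum_distrib_left[symmetric] matrix_sum_right mtrace_sum Re_sum)
  also have "Re (mtrace (\<sigma> ** (\<Sum>i=1..M. Eop i))) \<le> Re (mtrace \<sigma>)"
  proof -
    have "0 \<le> Re (mtrace (\<sigma> ** (mat 1 - (\<Sum>i=1..M. Eop i))))"
      using Ele by (intro psd_trace_nonneg sig) (simp add: op_le_def)
    then show ?thesis by (simp add: matrix_diff_ldistrib mtrace_diff)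
  qed
  also have "Re (mtrace \<sigma>) = real d ^ n"
    by (simp add: \<sigma>_def mtrace_kron_I mtrace_ptrace tr1 card)
  finally have S: "(\<Sum>i=1..M. x i) \<le> real M * Mx + c * real d ^ n"
    using c0 by (simp add: mult_left_mono)
  have cd: "c * real d ^ n = exp (real n * (ln (real d) - \<gamma>))"
  proof (cases "d = 0")
    case True
    have "CARD('a) > 0" by simp
    then have "n = 0" using card True by (cases n) auto
    then show ?thesis by (simp add: c_def)
  next
    case False
    then have "real d ^ n = exp (real n * ln (real d))"
      by (simp add: exp_of_nat_mult)
    then show ?thesis by (simp add: c_def algebra_simps exp_add[symmetric] exp_diff)
  qed
  have Mpos: "real M > 0" using M1 by simp
  have "(\<Sum>i=1..M. 1 - x i) = real M - (\<Sum>i=1..M. x i)"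
    by (simp add: sum_subtractf)
  then have "(1 / real M) * (\<Sum>i=1..M. 1 - x i) = 1 - (\<Sum>i=1..M. x i) / real M"
    using Mpos by (simp add: field_simps)
  also have "\<dots> \<ge> 1 - Mx - exp (real n * (ln (real d) - \<gamma>)) / real M"
  proof -
    define K where "K = exp (real n * (ln (real d) - \<gamma>))"
    have e1: "(Mx + K / real M) * real M = real M * Mx + K" using Mpos by (simp add: distrib_right)
    have e2: "c * real d ^ n = K" using cd by (simp add: K_def)
    have S': "(\<Sum>i=1..M. x i) \<le> (Mx + K / real M) * real M"
      using S e1 e2 by linarith
    then have "(\<Sum>i=1..M. x i) / real M \<le> Mx + K / real M"
      using Mpos by (simp add: pos_divide_le_eq)
    then show ?thesis by (simp add: K_def)
  qed
  finally show ?thesis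
    by (simp add: x_def Mx_def f_def)
qed

end
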